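(* Let $X$ be a finite set of proposals with $|X|\geq 3$. No divisiveness selection function on $X$ simultaneously satisfies Anonymity, Neutrality, Clone Consistency, and Position Unanimity.
   Context: $X!$ is the set of strict linear orders on $X$; a profile is a function $R:N\to X!$ with $N\subset\mathbb{N}$ finite and nonempty. A divisiveness selection function (DSF) maps every profile to a nonempty subset of $X$. Anonymity: $\Delta(R)=\Delta(R\circ\sigma)$ for every profile $R$ and every bijection $\sigma:\mathbb{N}\to\mathbb{N}$. Neutrality: $\Delta(\sigma(R))=\sigma(\Delta(R))$ for every profile $R$ and permutation $\sigma:X\to X$ (extended naturally to subsets of $X$ and to profiles). Two proposals are clones in $R$ if they are adjacent in every agent's ranking in $R$. Clone Consistency: for every profile $R$ and proposals $x,x',y$ such that $x,x'$ are clones in $R$ but $x,y$ are not, $\{x,y\}\subseteq\Delta(R)$ implies $\{x,x',y\}\subseteq\Delta(R)$. A profile is unanimous if all agents report the same ranking; $x$ occurs in the same position throughout $R$ if the number of proposals ranked above $x$ is the same in every ranking of $R$. Position Unanimity: $x\notin\Delta(R)$ for every non-unanimous profile $R$ and every proposal $x$ occurring in the same position throughout $R$. *)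

theory Defs
  imports Main
begin

(* Proposals are the elements of a finite type 'x (so X = UNIV :: 'x set).
   A ranking (element of X!) is a strict linear order r on X;
   (a, b) \<in> r means that a is ranked above b. *)

type_synonym 'x profile = "nat \<rightharpoonup> 'x rel"

definition is_profile :: "'x profile \<Rightarrow> bool" where
  "is_profile R \<longleftrightarrow> finite (dom R) \<and> dom R \<noteq> {} \<and>
     (\<forall>r \<in> ran R. strict_linear_order r)"

definition is_DSF :: "('x profile \<Rightarrow> 'x set) \<Rightarrow> bool" where
  "is_DSF \<Delta> \<longleftrightarrow> (\<forall>R. is_profile R \<longrightarrow> \<Delta> R \<noteq> {})"

definition anonymous :: "('x profile \<Rightarrow> 'x set) \<Rightarrow> bool" where
  "anonymous \<Delta> \<longleftrightarrow>
     (\<forall>R (\<sigma> :: nat \<Rightarrow> nat). is_profile R \<longrightarrow> bij \<sigma> \<longrightarrow> \<Delta> R = \<Delta> (R \<circ> \<sigma>))"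

definition perm_rel :: "('x \<Rightarrow> 'x) \<Rightarrow> 'x rel \<Rightarrow> 'x rel" where
  "perm_rel \<sigma> r = map_prod \<sigma> \<sigma> ` r"

definition perm_profile :: "('x \<Rightarrow> 'x) \<Rightarrow> 'x profile \<Rightarrow> 'x profile" where
  "perm_profile \<sigma> R = map_option (perm_rel \<sigma>) \<circ> R"

definition neutral :: "('x profile \<Rightarrow> 'x set) \<Rightarrow> bool" where
  "neutral \<Delta> \<longleftrightarrow>
     (\<forall>R \<sigma>. is_profile R \<longrightarrow> bij \<sigma> \<longrightarrow> \<Delta> (perm_profile \<sigma> R) = \<sigma> ` \<Delta> R)"

definition adjacent :: "'x rel \<Rightarrow> 'x \<Rightarrow> 'x \<Rightarrow> bool" where
  "adjacent r x y \<longleftrightarrow> x \<noteq> y \<and>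
     \<not> (\<exists>z. ((x, z) \<in> r \<and> (z, y) \<in> r) \<or> ((y, z) \<in> r \<and> (z, x) \<in> r))"

definition clones :: "'x profile \<Rightarrow> 'x \<Rightarrow> 'x \<Rightarrow> bool" where
  "clones R x y \<longleftrightarrow> (\<forall>r \<in> ran R. adjacent r x y)"

definition clone_consistent :: "('x profile \<Rightarrow> 'x set) \<Rightarrow> bool" where
  "clone_consistent \<Delta> \<longleftrightarrow>
     (\<forall>R x x' y. is_profile R \<longrightarrow> clones R x x' \<longrightarrow> \<not> clones R x y \<longrightarrow>
        {x, y} \<subseteq> \<Delta> R \<longrightarrow> {x, x', y} \<subseteq> \<Delta> R)"

definition unanimous :: "'x profile \<Rightarrow> bool" where
  "unanimous R \<longleftrightarrow> (\<forall>r \<in> ran R. \<forall>r' \<in> ran R. r = r')"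

definition position :: "'x rel \<Rightarrow> 'x \<Rightarrow> nat" where
  "position r x = card {y. (y, x) \<in> r}"

definition same_position :: "'x profile \<Rightarrow> 'x \<Rightarrow> bool" where
  "same_position R x \<longleftrightarrow> (\<forall>r \<in> ran R. \<forall>r' \<in> ran R. position r x = position r' x)"

definition position_unanimous :: "('x profile \<Rightarrow> 'x set) \<Rightarrow> bool" where
  "position_unanimous \<Delta> \<longleftrightarrow>
     (\<forall>R x. is_profile R \<longrightarrow> \<not> unanimous R \<longrightarrow> same_position R x \<longrightarrow> x \<notin> \<Delta> R)"

end

theory Submission
  imports Defs
begin

lemma slo_of_inj:
  assumes "inj (g :: 'x \<Rightarrow> nat)"
  shows "strict_linear_order {(x,y). g x < g y}"
  using assms unfolding strict_linear_order_on_def trans_def irrefl_def total_on_def inj_def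
  by (auto, metis linorder_neqE_nat)

lemma position_perm:
  assumes "bij \<sigma>"
  shows "position (perm_rel \<sigma> r) (\<sigma> x) = position r x"
proof -
  have "{y. (y, \<sigma> x) \<in> perm_rel \<sigma> r} = \<sigma> ` {y. (y,x) \<in> r}"
    using assms unfolding perm_rel_def bij_def inj_def by force
  moreover have "card (\<sigma> ` {y. (y,x) \<in> r}) = card {y. (y,x) \<in> r}"
    using assms by (meson bij_betw_imp_inj_on card_image inj_on_subset subset_UNIV)
  ultimately show ?thesis unfolding position_def by simp
qed

theorem theorem3:
  fixes \<Delta> :: "('x :: finite) profile \<Rightarrow> 'x set"
  assumes "card (UNIV :: 'x set) \<ge> 3"
  shows "\<not> (is_DSF \<Delta> \<and> anonymous \<Delta> \<and> neutral \<Delta> \<and> clone_consistent \<Delta> \<and> position_unanimous \<Delta>)"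
proof
  assume H: "is_DSF \<Delta> \<and> anonymous \<Delta> \<and> neutral \<Delta> \<and> clone_consistent \<Delta> \<and> position_unanimous \<Delta>"
  obtain a b c :: 'x where abc: "a \<noteq> b" "b \<noteq> c" "a \<noteq> c"
  proof -
    have "\<exists>A. A \<subseteq> (UNIV::'x set) \<and> card A = 3" using assms obtain_subset_with_card_n by metis
    then obtain A :: "'x set" where "card A = 3" by blast
    then show ?thesis using that by (auto simp: card_3_iff)
  qed
  obtain g :: "'x \<Rightarrow> nat" where g: "inj g"
    by (meson finite_UNIV finite_imp_inj_to_nat_seg)
  define f where "f x = (if x = a then 0 else if x = b then 1 else if x = c then 2 else g x + 3)" for x
  have finj: "inj f" using g abc unfolding inj_def f_def by auto
  define \<sigma> where "\<sigma> x = (if x = a then c else if x = c then a else x)" for x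
  have \<sigma>\<sigma>: "\<sigma> (\<sigma> x) = x" for x unfolding \<sigma>_def by auto
  have bs: "bij \<sigma>" by (metis \<sigma>\<sigma> bij_betw_byWitness subset_UNIV surjI top_greatest image_subsetI UNIV_I)
  define r1 where "r1 = {(x,y). f x < f y}"
  define r2 where "r2 = {(x,y). f (\<sigma> x) < f (\<sigma> y)}"
  have p12: "perm_rel \<sigma> r1 = r2"
    unfolding perm_rel_def r1_def r2_def
    by (auto simp: \<sigma>\<sigma> image_def) (metis \<sigma>\<sigma>)
  have p21: "perm_rel \<sigma> r2 = r1"
    unfolding perm_rel_def r1_def r2_def
    by (auto simp: \<sigma>\<sigma> image_def) (metis \<sigma>\<sigma>)
  have slo1: "strict_linear_order r1" unfolding r1_def using slo_of_inj[OF finj] .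
  have slo2: "strict_linear_order r2" unfolding r2_def
    using slo_of_inj[of "f \<circ> \<sigma>"] finj bs by (simp add: bij_is_inj inj_compose)
  define R :: "'x profile" where "R n = (if n = 0 then Some r1 else if n = 1 then Some r2 else None)" for n
  have ranR: "ran R = {r1, r2}" unfolding R_def ran_def by auto
  have domR: "dom R = {0, 1}" unfolding R_def dom_def by auto
  have prof: "is_profile R" unfolding is_profile_def using ranR domR slo1 slo2 by auto
  define \<tau> :: "nat \<Rightarrow> nat" where "\<tau> n = (if n = 0 then 1 else if n = 1 then 0 else n)" for n
  have bt: "bij \<tau>"
  proof -
    have "\<tau> (\<tau> n) = n" for n unfolding \<tau>_def by auto
    then show ?thesis by (metis bij_betw_byWitness subset_UNIV surjI top_greatest image_subsetI UNIV_I)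
  qed
  have pp: "perm_profile \<sigma> R = R \<circ> \<tau>"
    unfolding perm_profile_def by (rule ext) (simp add: R_def \<tau>_def p12 p21)
  have inv: "\<Delta> R = \<sigma> ` \<Delta> R"
    using H prof bs bt pp unfolding anonymous_def neutral_def by metis
  have nu: "\<not> unanimous R"
  proof -
    have "(a, c) \<in> r1" "(a, c) \<notin> r2" using abc by (auto simp: r1_def r2_def f_def \<sigma>_def)
    then show ?thesis unfolding unanimous_def ranR by auto
  qed
  have sp: "same_position R x" if "\<sigma> x = x" for x
  proof -
    have "position r2 x = position r1 x"
      using position_perm[OF bs, of r1 x] p12 that by simp
    then show ?thesis unfolding same_position_def ranR by auto
  qed
  have PU: "x \<notin> \<Delta> R" if "\<sigma> x = x" for x
    using H prof nu sp[OF that] unfolding position_unanimous_def by blast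
  have sub: "\<Delta> R \<subseteq> {a, c}"
  proof
    fix x assume "x \<in> \<Delta> R"
    then show "x \<in> {a, c}" using PU[of x] unfolding \<sigma>_def by (cases "x = a"; cases "x = c") auto
  qed
  have ne: "\<Delta> R \<noteq> {}" using H prof unfolding is_DSF_def by blast
  have ac: "{a, c} \<subseteq> \<Delta> R"
  proof -
    obtain x where x: "x \<in> \<Delta> R" using ne by blast
    then have "\<sigma> x \<in> \<Delta> R" using inv by blast
    moreover have "x = a \<or> x = c" using x sub by auto
    ultimately show ?thesis using x abc unfolding \<sigma>_def by auto
  qed
  have cl: "clones R a b"
    unfolding clones_def ranR adjacent_def using abc
    by (auto simp: r1_def r2_def f_def \<sigma>_def split: if_splits)
  have ncl: "\<not> clones R a c"
    unfolding clones_def ranR adjacent_def using abc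
    by (auto simp: r1_def r2_def f_def \<sigma>_def split: if_splits)
  have "b \<in> \<Delta> R"
    using H prof cl ncl ac unfolding clone_consistent_def by blast
  moreover have "\<sigma> b = b" using abc unfolding \<sigma>_def by auto
  ultimately show False using PU by blast
qed

end
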